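(* Let $N\ge1$ and let $f_0,\alpha,f_2,\dots,f_N$ be differentiable functions of $z$ with $\alpha(z)\in(-1,1)$; set $f_1\equiv0$ and $\hat I(z,\mu)=\sum_{i=0}^N f_i(z)\Phi_i(\mu)$, where $\Phi_i$ is taken with parameter $\alpha(z)$. Then $$\partial_z\hat I-\tilde{\mathcal P}\,\partial_z\hat I=\big(\alpha\,\partial_zf_N-4f_N\,\partial_z\alpha\big)\tilde\Phi_{N+1},$$ and consequently, for $k=0,\dots,N$, $$\int_{-1}^1\mu^{k+1}\big(\partial_z\hat I-\tilde{\mathcal P}\partial_z\hat I\big)\,d\mu=\begin{cases}0,&k<N,\\ \tilde K_{N+1,N+1}\big(\alpha\,\partial_zf_N-4f_N\,\partial_z\alpha\big),&k=N.\end{cases}$$ In particular, for $N=1$ all these quantities vanish.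
   Context: For a parameter $\alpha\in(-1,1)$ define on $[-1,1]$ the weights $\omega(\mu)=(1+\alpha\mu)^{-4}$ and $\tilde\omega(\mu)=(1+\alpha\mu)^{-5}$. Let $\{\phi_k\}_{k\ge0}$ (resp. $\{\tilde\phi_k\}_{k\ge0}$) be the monic orthogonal polynomials on $[-1,1]$ with respect to $\omega$ (resp. $\tilde\omega$); their coefficients depend smoothly on $\alpha$. Set $\Phi_k=\omega\phi_k$, $\tilde\Phi_k=\tilde\omega\tilde\phi_k$, $\tilde K_{j,k}=\int_{-1}^1\mu^j\tilde\phi_k\,\tilde\omega\,d\mu$. The operator $\tilde{\mathcal P}$ (at parameter $\alpha$) is the orthogonal projection onto $\mathrm{span}\{\tilde\Phi_0,\dots,\tilde\Phi_N\}$ with respect to the inner product $\langle\Phi,\Psi\rangle=\int_{-1}^1\Phi\Psi/\tilde\omega\,d\mu$, i.e. $\tilde{\mathcal P}g=\sum_{i=0}^N\frac{\int_{-1}^1 g\,\tilde\phi_i\,d\mu}{\tilde K_{i,i}}\tilde\Phi_i$. *)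

theory Defs
  imports "HOL-Analysis.Analysis" "HOL-Computational_Algebra.Polynomial"
begin

definition omega :: "real \<Rightarrow> real \<Rightarrow> real" where
  "omega a \<mu> = 1 / (1 + a * \<mu>) ^ 4"

definition omegat :: "real \<Rightarrow> real \<Rightarrow> real" where
  "omegat a \<mu> = 1 / (1 + a * \<mu>) ^ 5"

definition monic_OP :: "(real \<Rightarrow> real) \<Rightarrow> nat \<Rightarrow> real poly" where
  "monic_OP w k = (THE p. degree p = k \<and> lead_coeff p = 1 \<and>
     (\<forall>q. degree q < k \<longrightarrow> integral {-1..1} (\<lambda>\<mu>. poly p \<mu> * poly q \<mu> * w \<mu>) = 0))"

definition phi :: "real \<Rightarrow> nat \<Rightarrow> real poly" where
  "phi a k = monic_OP (omega a) k"

definition phit :: "real \<Rightarrow> nat \<Rightarrow> real poly" where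
  "phit a k = monic_OP (omegat a) k"

definition Phi :: "real \<Rightarrow> nat \<Rightarrow> real \<Rightarrow> real" where
  "Phi a k \<mu> = omega a \<mu> * poly (phi a k) \<mu>"

definition Phit :: "real \<Rightarrow> nat \<Rightarrow> real \<Rightarrow> real" where
  "Phit a k \<mu> = omegat a \<mu> * poly (phit a k) \<mu>"

definition Kt :: "real \<Rightarrow> nat \<Rightarrow> nat \<Rightarrow> real" where
  "Kt a j k = integral {-1..1} (\<lambda>\<mu>. \<mu> ^ j * poly (phit a k) \<mu> * omegat a \<mu>)"

definition Pt :: "real \<Rightarrow> nat \<Rightarrow> (real \<Rightarrow> real) \<Rightarrow> real \<Rightarrow> real" where
  "Pt a N g \<mu> = (\<Sum>i\<le>N. integral {-1..1} (\<lambda>\<nu>. g \<nu> * poly (phit a i) \<nu>) / Kt a i i * Phit a i \<mu>)"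

definition Ihat :: "nat \<Rightarrow> (nat \<Rightarrow> real \<Rightarrow> real) \<Rightarrow> (real \<Rightarrow> real) \<Rightarrow> real \<Rightarrow> real \<Rightarrow> real" where
  "Ihat N f \<alpha> z \<mu> = (\<Sum>i\<le>N. f i z * Phi (\<alpha> z) i \<mu>)"

end

theory Submission
  imports Defs
begin

definition goodw :: "(real \<Rightarrow> real) \<Rightarrow> bool" where
  "goodw w \<longleftrightarrow> continuous_on {-1..1} w \<and> (\<forall>\<mu>\<in>{-1..1}. 0 < w \<mu>)"

definition ip :: "(real \<Rightarrow> real) \<Rightarrow> real poly \<Rightarrow> real poly \<Rightarrow> real" where
  "ip w p q = integral {-1..1} (\<lambda>\<mu>. poly p \<mu> * poly q \<mu> * w \<mu>)"

lemma ip_integrable: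
  assumes "continuous_on {-1..1} w"
  shows "(\<lambda>\<mu>. poly p \<mu> * poly q \<mu> * w \<mu>) integrable_on {-1..1::real}"
  by (intro integrable_continuous_interval continuous_intros assms)

lemma ip_sym: "ip w p q = ip w q p"
  unfolding ip_def by (simp add: mult.commute mult.left_commute)

lemma ip_add_left:
  assumes "continuous_on {-1..1} w"
  shows "ip w (p + r) q = ip w p q + ip w r q"
proof -
  have "ip w (p + r) q = integral {-1..1} (\<lambda>\<mu>. poly p \<mu> * poly q \<mu> * w \<mu> + poly r \<mu> * poly q \<mu> * w \<mu>)"
    unfolding ip_def by (simp add: algebra_simps)
  also have "\<dots> = ip w p q + ip w r q"
    unfolding ip_def by (rule integral_add; rule ip_integrable[OF assms])
  finally show ?thesis .
qed

lemma ip_smult_left: "ip w (smult c p) q = c * ip w p q"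
proof -
  have "ip w (smult c p) q = integral {-1..1} (\<lambda>\<mu>. c * (poly p \<mu> * poly q \<mu> * w \<mu>))"
    unfolding ip_def by (simp add: algebra_simps)
  also have "\<dots> = c * ip w p q" unfolding ip_def by simp
  finally show ?thesis .
qed

lemma ip_zero_left: "ip w 0 q = 0"
  unfolding ip_def by simp

lemma ip_minus_left: "ip w (- p) q = - ip w p q"
  using ip_smult_left[of w "-1" p q] by simp

lemma ip_diff_left:
  assumes "continuous_on {-1..1} w"
  shows "ip w (p - r) q = ip w p q - ip w r q"
  using ip_add_left[OF assms, of p "-r" q] ip_minus_left[of w r q] by simp

lemma ip_sum_left:
  assumes "continuous_on {-1..1} w"
  shows "ip w (\<Sum>i\<in>S. p i) q = (\<Sum>i\<in>S. ip w (p i) q)"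
  by (induction S rule: infinite_finite_induct) (auto simp: ip_zero_left ip_add_left[OF assms])

lemma ip_pos:
  assumes "goodw w" "p \<noteq> 0"
  shows "ip w p p > 0"
proof -
  have cw: "continuous_on {-1..1} w" and wp: "\<And>\<mu>. \<mu> \<in> {-1..1} \<Longrightarrow> 0 < w \<mu>"
    using assms(1) unfolding goodw_def by auto
  have nn: "\<And>\<mu>. \<mu> \<in> {-1..1} \<Longrightarrow> 0 \<le> poly p \<mu> * poly p \<mu> * w \<mu>"
    using wp by (metis mult_nonneg_nonneg zero_le_square less_imp_le)
  have ge: "ip w p p \<ge> 0" unfolding ip_def
    by (rule integral_nonneg[OF ip_integrable[OF cw]]) (use nn in auto)
  have "ip w p p \<noteq> 0"
  proof
    assume "ip w p p = 0"
    then have "\<forall>x\<in>{-1..1}. poly p x * poly p x * w x = 0"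
      unfolding ip_def
      by (subst (asm) integral_eq_0_iff) (auto intro!: continuous_intros cw nn)
    then have "\<forall>x\<in>{-1..1::real}. poly p x = 0" using wp by force
    then have "{-1..1::real} \<subseteq> {x. poly p x = 0}" by auto
    moreover have "infinite {-1..1::real}" by (simp add: infinite_Icc)
    ultimately have "infinite {x. poly p x = 0}" using finite_subset by blast
    with poly_roots_finite[OF assms(2)] show False by simp
  qed
  with ge show ?thesis by simp
qed

function gs :: "(real \<Rightarrow> real) \<Rightarrow> nat \<Rightarrow> real poly" where
  "gs w k = monom 1 k - (\<Sum>j<k. smult (ip w (monom 1 k) (gs w j) / ip w (gs w j) (gs w j)) (gs w j))"
  by auto
termination by (relation "Wellfounded.measure snd") auto

declare gs.simps[simp del]

lemma gs_deg: "degree (gs w k) = k \<and> coeff (gs w k) k = 1"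
proof (induction k rule: less_induct)
  case (less k)
  define S where "S = (\<Sum>j<k. smult (ip w (monom 1 k) (gs w j) / ip w (gs w j) (gs w j)) (gs w j))"
  have g: "gs w k = monom 1 k - S" unfolding S_def by (rule gs.simps)
  show ?case
  proof (cases k)
    case 0
    then show ?thesis using g by (simp add: S_def)
  next
    case (Suc m)
    have dS: "degree S < k" unfolding S_def
    proof (rule degree_sum_less)
      fix j assume j: "j \<in> {..<k}"
      then have "degree (gs w j) = j" using less by auto
      then show "degree (smult (ip w (monom 1 k) (gs w j) / ip w (gs w j) (gs w j)) (gs w j)) < k"
        using j by (intro le_less_trans[OF degree_smult_le]) auto
    next
      show "0 < k" using Suc by simp
    qed
    have "coeff S k = 0" using dS by (simp add: coeff_eq_0)
    moreover have "degree (monom 1 k - S) = k"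
    proof -
      have "degree (monom 1 k + (- S)) = degree (monom 1 (k::nat) :: real poly)"
        using dS by (intro degree_add_eq_left) (simp add: degree_monom_eq)
      then show ?thesis by (simp add: degree_monom_eq)
    qed
    ultimately show ?thesis using g by simp
  qed
qed

lemma gs_nz: "gs w k \<noteq> 0"
proof
  assume "gs w k = 0"
  then show False using gs_deg[of w k] by simp
qed

lemma gs_orth_aux:
  assumes "goodw w"
  shows "\<forall>j<k. ip w (gs w k) (gs w j) = 0"
proof (induction k rule: less_induct)
  case (less k)
  have cw: "continuous_on {-1..1} w" using assms unfolding goodw_def by auto
  show ?case
  proof (intro allI impI)
    fix j assume jk: "j < k"
    have o: "ip w (gs w i) (gs w j) = 0" if "i < k" "i \<noteq> j" for i
    proof (cases "i < j")
      case True
      then have "ip w (gs w j) (gs w i) = 0" using less[of j] jk by blast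
      then show ?thesis by (subst ip_sym) assumption
    next
      case False
      then have "j < i" using that by simp
      then show ?thesis using less[of i] that by blast
    qed
    have pj: "ip w (gs w j) (gs w j) \<noteq> 0" using ip_pos[OF assms gs_nz[of w j]] by simp
    have "ip w (gs w k) (gs w j) = ip w (monom 1 k) (gs w j) -
       (\<Sum>i<k. ip w (monom 1 k) (gs w i) / ip w (gs w i) (gs w i) * ip w (gs w i) (gs w j))"
      by (simp only: gs.simps[of w k] ip_diff_left[OF cw] ip_sum_left[OF cw] ip_smult_left)
    also have "(\<Sum>i<k. ip w (monom 1 k) (gs w i) / ip w (gs w i) (gs w i) * ip w (gs w i) (gs w j))
       = (\<Sum>i<k. if i = j then ip w (monom 1 k) (gs w j) else 0)"
    proof (rule sum.cong[OF refl])
      fix i assume "i \<in> {..<k}"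
      then show "ip w (monom 1 k) (gs w i) / ip w (gs w i) (gs w i) * ip w (gs w i) (gs w j) =
        (if i = j then ip w (monom 1 k) (gs w j) else 0)"
        by (cases "i = j") (simp_all add: o pj)
    qed
    also have "\<dots> = ip w (monom 1 k) (gs w j)" using jk by simp
    finally show "ip w (gs w k) (gs w j) = 0" by simp
  qed
qed

lemma orth_lemma:
  assumes cw: "continuous_on {-1..1} w" and o: "\<forall>j<k. ip w p (gs w j) = 0"
  shows "degree q < k \<Longrightarrow> ip w p q = 0"
proof (induction "degree q" arbitrary: q rule: less_induct)
  case less
  define d where "d = degree q"
  define r where "r = q - smult (coeff q d) (gs w d)"
  have ipq: "ip w q p = ip w r p + coeff q d * ip w (gs w d) p"
    unfolding r_def by (simp add: ip_diff_left[OF cw] ip_smult_left)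
  have "ip w (gs w d) p = 0" using o less(2) by (simp add: d_def ip_sym)
  moreover have "ip w r p = 0"
  proof (cases "r = 0")
    case True then show ?thesis by (simp add: ip_zero_left)
  next
    case False
    have dr: "degree r \<le> d" unfolding r_def using gs_deg[of w d]
      by (intro degree_diff_le) (auto simp: d_def intro: order.trans[OF degree_smult_le])
    have "coeff r d = 0" unfolding r_def using gs_deg[of w d] by simp
    then have "degree r \<noteq> d" using False by (metis leading_coeff_0_iff)
    then have "degree r < degree q" using dr d_def by simp
    then show ?thesis using less(1)[of r] less(2) by (simp add: ip_sym)
  qed
  ultimately show ?case using ipq by (simp add: ip_sym)
qed

lemma gs_orth:
  assumes "goodw w" "degree q < k"
  shows "ip w (gs w k) q = 0"
  using orth_lemma[of w k "gs w k" q] gs_orth_aux[OF assms(1)] assms unfolding goodw_def by auto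

lemma monic_OP_gs:
  assumes "goodw w"
  shows "monic_OP w k = gs w k"
proof -
  have cw: "continuous_on {-1..1} w" using assms unfolding goodw_def by auto
  show ?thesis unfolding monic_OP_def
  proof (rule the_equality)
    show "degree (gs w k) = k \<and> lead_coeff (gs w k) = 1 \<and>
      (\<forall>q. degree q < k \<longrightarrow> integral {-1..1} (\<lambda>\<mu>. poly (gs w k) \<mu> * poly q \<mu> * w \<mu>) = 0)"
      using gs_deg[of w k] gs_orth[OF assms] by (auto simp: ip_def)
  next
    fix p assume p: "degree p = k \<and> lead_coeff p = 1 \<and>
      (\<forall>q. degree q < k \<longrightarrow> integral {-1..1} (\<lambda>\<mu>. poly p \<mu> * poly q \<mu> * w \<mu>) = 0)"
    define r where "r = p - gs w k"
    show "p = gs w k"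
    proof (rule ccontr)
      assume "p \<noteq> gs w k"
      then have rnz: "r \<noteq> 0" by (simp add: r_def)
      have dr: "degree r \<le> k" unfolding r_def using gs_deg[of w k] p
        by (intro degree_diff_le) auto
      have "coeff r k = 0" unfolding r_def using gs_deg[of w k] p by auto
      then have "degree r \<noteq> k" using rnz by (metis leading_coeff_0_iff)
      then have dlt: "degree r < k" using dr by simp
      have "ip w r r = ip w p r - ip w (gs w k) r" unfolding r_def by (simp add: ip_diff_left[OF cw])
      also have "\<dots> = 0" using p dlt gs_orth[OF assms dlt] by (simp add: ip_def)
      finally show False using ip_pos[OF assms rnz] by simp
    qed
  qed
qed


lemma one_plus_pos:
  assumes a: "a \<in> {-1<..<1::real}" and m: "\<mu> \<in> {-1..1::real}"
  shows "0 < 1 + a * \<mu>"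
proof -
  have "\<bar>\<mu>\<bar> \<le> 1" using m by auto
  then have "\<bar>a\<bar> * \<bar>\<mu>\<bar> \<le> \<bar>a\<bar>" by (intro mult_left_le) auto
  moreover have "\<bar>a\<bar> < 1" using a by auto
  ultimately have "\<bar>a * \<mu>\<bar> < 1" by (simp add: abs_mult)
  then show ?thesis by (simp add: abs_less_iff)
qed

lemma goodw_omega:
  assumes a: "a \<in> {-1<..<1::real}"
  shows "goodw (omega a)"
  unfolding goodw_def omega_def
proof
  show "continuous_on {-1..1} (\<lambda>\<mu>. 1 / (1 + a * \<mu>) ^ 4)"
  proof (intro continuous_intros ballI)
    fix \<mu> :: real assume "\<mu> \<in> {-1..1}"
    then show "(1 + a * \<mu>) ^ 4 \<noteq> 0" using one_plus_pos[OF a, of \<mu>] by simp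
  qed
  show "\<forall>\<mu>\<in>{-1..1}. 0 < 1 / (1 + a * \<mu>) ^ 4"
  proof
    fix \<mu> :: real assume "\<mu> \<in> {-1..1}"
    then show "0 < 1 / (1 + a * \<mu>) ^ 4" using one_plus_pos[OF a, of \<mu>] by simp
  qed
qed

lemma goodw_omegat:
  assumes a: "a \<in> {-1<..<1::real}"
  shows "goodw (omegat a)"
  unfolding goodw_def omegat_def
proof
  show "continuous_on {-1..1} (\<lambda>\<mu>. 1 / (1 + a * \<mu>) ^ 5)"
  proof (intro continuous_intros ballI)
    fix \<mu> :: real assume "\<mu> \<in> {-1..1}"
    then show "(1 + a * \<mu>) ^ 5 \<noteq> 0" using one_plus_pos[OF a, of \<mu>] by simp
  qed
  show "\<forall>\<mu>\<in>{-1..1}. 0 < 1 / (1 + a * \<mu>) ^ 5"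
  proof
    fix \<mu> :: real assume "\<mu> \<in> {-1..1}"
    then show "0 < 1 / (1 + a * \<mu>) ^ 5" using one_plus_pos[OF a, of \<mu>] by simp
  qed
qed

lemma phi_gs: "a \<in> {-1<..<1} \<Longrightarrow> phi a k = gs (omega a) k"
  unfolding phi_def by (rule monic_OP_gs[OF goodw_omega])

lemma phit_gs: "a \<in> {-1<..<1} \<Longrightarrow> phit a k = gs (omegat a) k"
  unfolding phit_def by (rule monic_OP_gs[OF goodw_omegat])

definition mom :: "(real \<Rightarrow> real) \<Rightarrow> nat \<Rightarrow> real" where
  "mom w m = integral {-1..1} (\<lambda>\<mu>. \<mu> ^ m * w \<mu>)"

lemma poly_sum_le:
  fixes p :: "real poly"
  assumes "degree p \<le> n"
  shows "poly p x = (\<Sum>r\<le>n. coeff p r * x ^ r)"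
proof -
  have "poly p x = poly (\<Sum>r\<le>n. monom (coeff p r) r) x"
    by (simp only: poly_as_sum_of_monoms'[OF assms])
  also have "\<dots> = (\<Sum>r\<le>n. coeff p r * x ^ r)" by (simp add: poly_sum poly_monom)
  finally show ?thesis .
qed

lemma ip_expand:
  assumes cw: "continuous_on {-1..1} w" and dp: "degree p \<le> n" and dq: "degree q \<le> n"
  shows "ip w p q = (\<Sum>r\<le>n. \<Sum>s\<le>n. coeff p r * coeff q s * mom w (r + s))"
proof -
  have int: "(\<lambda>\<mu>. (coeff p r * coeff q s) * (\<mu> ^ (r + s) * w \<mu>)) integrable_on {-1..1::real}" for r s
    by (intro integrable_continuous_interval continuous_intros cw)
  have eq: "poly p \<mu> * poly q \<mu> * w \<mu> =
      (\<Sum>r\<le>n. \<Sum>s\<le>n. (coeff p r * coeff q s) * (\<mu> ^ (r + s) * w \<mu>))" for \<mu>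
  proof -
    have "poly p \<mu> * poly q \<mu> * w \<mu> = (\<Sum>r\<le>n. coeff p r * \<mu> ^ r) * (\<Sum>s\<le>n. coeff q s * \<mu> ^ s) * w \<mu>"
      by (simp only: poly_sum_le[OF dp] poly_sum_le[OF dq])
    also have "\<dots> = (\<Sum>r\<le>n. \<Sum>s\<le>n. (coeff p r * \<mu> ^ r) * (coeff q s * \<mu> ^ s)) * w \<mu>"
      by (simp only: sum_product)
    also have "\<dots> = (\<Sum>r\<le>n. \<Sum>s\<le>n. (coeff p r * \<mu> ^ r) * (coeff q s * \<mu> ^ s) * w \<mu>)"
      by (simp only: sum_distrib_right)
    also have "\<dots> = (\<Sum>r\<le>n. \<Sum>s\<le>n. (coeff p r * coeff q s) * (\<mu> ^ (r + s) * w \<mu>))"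
      by (intro sum.cong refl) (simp add: power_add mult_ac)
    finally show ?thesis .
  qed
  have "ip w p q = integral {-1..1} (\<lambda>\<mu>. \<Sum>r\<le>n. \<Sum>s\<le>n. (coeff p r * coeff q s) * (\<mu> ^ (r + s) * w \<mu>))"
    unfolding ip_def eq ..
  also have "\<dots> = (\<Sum>r\<le>n. integral {-1..1} (\<lambda>\<mu>. \<Sum>s\<le>n. (coeff p r * coeff q s) * (\<mu> ^ (r + s) * w \<mu>)))"
    by (rule integral_sum) (auto intro!: integrable_sum int)
  also have "\<dots> = (\<Sum>r\<le>n. \<Sum>s\<le>n. integral {-1..1} (\<lambda>\<mu>. (coeff p r * coeff q s) * (\<mu> ^ (r + s) * w \<mu>)))"
    by (intro sum.cong refl integral_sum) (auto intro!: int)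
  also have "\<dots> = (\<Sum>r\<le>n. \<Sum>s\<le>n. coeff p r * coeff q s * mom w (r + s))"
    by (simp only: integral_mult_right mom_def)
  finally show ?thesis .
qed

definition dU :: "(real \<Rightarrow> real) \<Rightarrow> bool" where
  "dU f \<longleftrightarrow> (\<forall>a\<in>{-1<..<1}. f differentiable (at a))"

lemma dU_const: "dU (\<lambda>b. c)" unfolding dU_def by simp
lemma dU_add: "dU f \<Longrightarrow> dU g \<Longrightarrow> dU (\<lambda>b. f b + g b)" unfolding dU_def by simp
lemma dU_diff: "dU f \<Longrightarrow> dU g \<Longrightarrow> dU (\<lambda>b. f b - g b)" unfolding dU_def by simp
lemma dU_mult: "dU f \<Longrightarrow> dU g \<Longrightarrow> dU (\<lambda>b. f b * g b)" unfolding dU_def by simp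
lemma dU_divide: "dU f \<Longrightarrow> dU g \<Longrightarrow> (\<And>b. b \<in> {-1<..<1} \<Longrightarrow> g b \<noteq> 0) \<Longrightarrow> dU (\<lambda>b. f b / g b)"
  unfolding dU_def by simp
lemma dU_sum: "(\<And>i. i \<in> S \<Longrightarrow> dU (f i)) \<Longrightarrow> dU (\<lambda>b. \<Sum>i\<in>S. f i b)"
  unfolding dU_def by (cases "finite S") auto

lemma dU_cong:
  assumes "dU f" "\<And>b. b \<in> {-1<..<1} \<Longrightarrow> f b = g b"
  shows "dU g"
  unfolding dU_def
proof
  fix a :: real assume a: "a \<in> {-1<..<1}"
  then obtain D where "(f has_derivative D) (at a)" using assms(1) unfolding dU_def differentiable_def by blast
  then have "(g has_derivative D) (at a)"
    by (rule has_derivative_transform_within_open[where s="{-1<..<1}"]) (use a assms(2) in auto)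
  then show "g differentiable (at a)" unfolding differentiable_def by blast
qed

lemma mom_dU: "dU (\<lambda>b. mom (omega b) m)"
  unfolding dU_def
proof
  fix a :: real assume a: "a \<in> {-1<..<1}"
  define U where "U = {-1<..<1::real}"
  have nz: "1 + x * t \<noteq> 0" if "x \<in> U" "t \<in> cbox (-1) 1" for x t
    using one_plus_pos[of x t] that by (auto simp: U_def)
  have L: "((\<lambda>b. integral (cbox (-1) 1) (\<lambda>\<mu>. \<mu> ^ m * omega b \<mu>)) has_field_derivative
      integral (cbox (-1) 1) (\<lambda>t. t ^ m * (-4 * t / (1 + a * t) ^ 5))) (at a within U)"
  proof (rule leibniz_rule_field_derivative[where fx = "\<lambda>x t. t ^ m * (-4 * t / (1 + x * t) ^ 5)"])
    fix x t assume xt: "x \<in> U" "t \<in> cbox (-1::real) 1"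
    have n: "1 + x * t \<noteq> 0" using nz[OF xt] .
    show "((\<lambda>x. t ^ m * omega x t) has_field_derivative t ^ m * (-4 * t / (1 + x * t) ^ 5)) (at x within U)"
      unfolding omega_def
    proof -
      have d1: "((\<lambda>x. 1 + x * t) has_field_derivative 0 + 1 * t) (at x within U)"
        by (rule DERIV_add[OF DERIV_const DERIV_cmult_right[OF DERIV_ident]])
      have d2: "((\<lambda>x. (1 + x * t) ^ 4) has_field_derivative of_nat 4 * ((0 + 1 * t) * (1 + x * t) ^ (4 - Suc 0))) (at x within U)"
        by (rule DERIV_power[OF d1])
      have n4: "(1 + x * t) ^ 4 \<noteq> 0" using n by simp
      have d3: "((\<lambda>x. 1 / (1 + x * t) ^ 4) has_field_derivative
          (0 * (1 + x * t) ^ 4 - 1 * (of_nat 4 * ((0 + 1 * t) * (1 + x * t) ^ (4 - Suc 0)))) / ((1 + x * t) ^ 4 * (1 + x * t) ^ 4)) (at x within U)"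
        by (rule DERIV_divide[OF DERIV_const d2 n4])
      have eq: "(0 * (1 + x * t) ^ 4 - 1 * (of_nat 4 * ((0 + 1 * t) * (1 + x * t) ^ (4 - Suc 0)))) / ((1 + x * t) ^ 4 * (1 + x * t) ^ 4)
          = -4 * t / (1 + x * t) ^ 5"
        using n by (simp add: field_simps)
      show "((\<lambda>x. t ^ m * (1 / (1 + x * t) ^ 4)) has_field_derivative t ^ m * (-4 * t / (1 + x * t) ^ 5)) (at x within U)"
        using DERIV_cmult[OF d3, of "t ^ m"] unfolding eq .
    qed
  next
    fix x assume x: "x \<in> U"
    show "(\<lambda>t. t ^ m * omega x t) integrable_on cbox (-1) 1"
      unfolding omega_def
      by (intro integrable_continuous continuous_intros ballI) (simp add: nz[OF x])
  next
    show "continuous_on (U \<times> cbox (-1) 1) (\<lambda>(x, t). t ^ m * (-4 * t / (1 + x * t) ^ 5))"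
      unfolding case_prod_beta
      by (intro continuous_intros ballI) (auto simp: nz)
  next
    show "a \<in> U" using a by (simp add: U_def)
    show "convex U" by (simp add: U_def convex_real_interval)
  qed
  have "((\<lambda>b. mom (omega b) m) has_field_derivative
      integral (cbox (-1) 1) (\<lambda>t. t ^ m * (-4 * t / (1 + a * t) ^ 5))) (at a)"
  proof -
    have at: "at a within U = at a" by (rule at_within_open) (use a in \<open>auto simp: U_def\<close>)
    show ?thesis using L unfolding at mom_def interval_cbox .
  qed
  then show "(\<lambda>b. mom (omega b) m) differentiable (at a)"
    unfolding differentiable_def has_field_derivative_def by blast
qed

lemma dU_ip:
  assumes "\<And>b. b \<in> {-1<..<1} \<Longrightarrow> degree (p b) \<le> n" "\<And>b. b \<in> {-1<..<1} \<Longrightarrow> degree (q b) \<le> n"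
    "\<And>r. dU (\<lambda>b. coeff (p b) r)" "\<And>s. dU (\<lambda>b. coeff (q b) s)"
  shows "dU (\<lambda>b. ip (omega b) (p b) (q b))"
proof (rule dU_cong)
  show "dU (\<lambda>b. \<Sum>r\<le>n. \<Sum>s\<le>n. coeff (p b) r * coeff (q b) s * mom (omega b) (r + s))"
    by (intro dU_sum dU_mult assms mom_dU)
  fix b :: real assume b: "b \<in> {-1<..<1}"
  have c: "continuous_on {-1..1} (omega b)" using goodw_omega[OF b] unfolding goodw_def by auto
  show "(\<Sum>r\<le>n. \<Sum>s\<le>n. coeff (p b) r * coeff (q b) s * mom (omega b) (r + s)) = ip (omega b) (p b) (q b)"
    by (rule ip_expand[OF c assms(1)[OF b] assms(2)[OF b], symmetric])
qed

lemma dU_gs: "dU (\<lambda>b. coeff (gs (omega b) k) j)"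
proof (induction k arbitrary: j rule: less_induct)
  case (less k)
  have eq: "coeff (gs (omega b) k) j = coeff (monom 1 k) j -
      (\<Sum>i<k. ip (omega b) (monom 1 k) (gs (omega b) i) / ip (omega b) (gs (omega b) i) (gs (omega b) i)
          * coeff (gs (omega b) i) j)" for b
    by (simp only: gs.simps[of "omega b" k] coeff_diff coeff_sum coeff_smult)
  have dg: "degree (gs w i) \<le> n" if "i \<le> n" for w i n using gs_deg[of w i] that by simp
  show ?case
    unfolding eq
  proof (intro dU_diff dU_const dU_sum dU_mult dU_divide)
    fix i assume i: "i \<in> {..<k}"
    show "dU (\<lambda>b. coeff (gs (omega b) i) j)" using less i by simp
    show "dU (\<lambda>b. ip (omega b) (monom 1 k) (gs (omega b) i))"
      by (rule dU_ip[where n=k]) (use i less in \<open>auto simp: degree_monom_le dg dU_const\<close>)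
    show "dU (\<lambda>b. ip (omega b) (gs (omega b) i) (gs (omega b) i))"
      by (rule dU_ip[where n=i]) (use i less in \<open>auto simp: dg\<close>)
    fix b :: real assume b: "b \<in> {-1<..<1}"
    show "ip (omega b) (gs (omega b) i) (gs (omega b) i) \<noteq> 0"
      using ip_pos[OF goodw_omega[OF b] gs_nz[of "omega b" i]] by simp
  qed
qed

lemma dU_phi: "dU (\<lambda>b. coeff (phi b k) j)"
  by (rule dU_cong[OF dU_gs]) (simp add: phi_gs)


lemma omega_deriv:
  assumes n: "1 + a * \<mu> \<noteq> 0"
  shows "((\<lambda>b. omega b \<mu>) has_field_derivative -4 * \<mu> / (1 + a * \<mu>) ^ 5) (at a within S)"
proof -
  have d1: "((\<lambda>x. 1 + x * \<mu>) has_field_derivative 0 + 1 * \<mu>) (at a within S)"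
    by (rule DERIV_add[OF DERIV_const DERIV_cmult_right[OF DERIV_ident]])
  have d2: "((\<lambda>x. (1 + x * \<mu>) ^ 4) has_field_derivative of_nat 4 * ((0 + 1 * \<mu>) * (1 + a * \<mu>) ^ (4 - Suc 0))) (at a within S)"
    by (rule DERIV_power[OF d1])
  have n4: "(1 + a * \<mu>) ^ 4 \<noteq> 0" using n by simp
  have d3: "((\<lambda>x. 1 / (1 + x * \<mu>) ^ 4) has_field_derivative
      (0 * (1 + a * \<mu>) ^ 4 - 1 * (of_nat 4 * ((0 + 1 * \<mu>) * (1 + a * \<mu>) ^ (4 - Suc 0)))) / ((1 + a * \<mu>) ^ 4 * (1 + a * \<mu>) ^ 4)) (at a within S)"
    by (rule DERIV_divide[OF DERIV_const d2 n4])
  have eq: "(0 * (1 + a * \<mu>) ^ 4 - 1 * (of_nat 4 * ((0 + 1 * \<mu>) * (1 + a * \<mu>) ^ (4 - Suc 0)))) / ((1 + a * \<mu>) ^ 4 * (1 + a * \<mu>) ^ 4)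
      = -4 * \<mu> / (1 + a * \<mu>) ^ 5"
    using n by (simp add: field_simps)
  show ?thesis unfolding omega_def using d3 unfolding eq .
qed

definition Dp :: "real \<Rightarrow> nat \<Rightarrow> real poly" where
  "Dp a i = (\<Sum>j<i. monom (deriv (\<lambda>b. coeff (phi b i) j) a) j)"

lemma coeff_phi_top: "a \<in> {-1<..<1} \<Longrightarrow> coeff (phi a i) i = 1"
  using gs_deg by (simp add: phi_gs)

lemma degree_phi: "a \<in> {-1<..<1} \<Longrightarrow> degree (phi a i) = i"
  using gs_deg by (simp add: phi_gs)

lemma Phi_deriv:
  assumes a: "a \<in> {-1<..<1}" and m: "\<mu> \<in> {-1..1}"
  shows "((\<lambda>b. Phi b i \<mu>) has_field_derivative
     (-4 * \<mu> / (1 + a * \<mu>) ^ 5 * poly (phi a i) \<mu> + omega a \<mu> * poly (Dp a i) \<mu>)) (at a)"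
proof -
  have rep: "poly (phi b i) \<mu> = \<mu> ^ i + (\<Sum>j<i. coeff (phi b i) j * \<mu> ^ j)" if b: "b \<in> {-1<..<1}" for b
  proof -
    have "poly (phi b i) \<mu> = (\<Sum>j<Suc i. coeff (phi b i) j * \<mu> ^ j)"
      using poly_sum_le[of "phi b i" i \<mu>] degree_phi[OF b] by (simp add: lessThan_Suc_atMost)
    also have "\<dots> = (\<Sum>j<i. coeff (phi b i) j * \<mu> ^ j) + coeff (phi b i) i * \<mu> ^ i"
      by (rule sum.lessThan_Suc)
    finally show ?thesis using coeff_phi_top[OF b] by simp
  qed
  have cd: "((\<lambda>b. coeff (phi b i) j) has_field_derivative deriv (\<lambda>b. coeff (phi b i) j) a) (at a)" for j
    using dU_phi[of i j] a unfolding dU_def by (simp add: DERIV_deriv_iff_real_differentiable)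
  have n: "1 + a * \<mu> \<noteq> 0" using one_plus_pos[OF a m] by simp
  have s: "((\<lambda>b. \<mu> ^ i + (\<Sum>j<i. coeff (phi b i) j * \<mu> ^ j)) has_field_derivative
      0 + (\<Sum>j<i. deriv (\<lambda>b. coeff (phi b i) j) a * \<mu> ^ j)) (at a)"
    by (rule DERIV_add[OF DERIV_const DERIV_sum[OF DERIV_cmult_right[OF cd]]])
  have h: "((\<lambda>b. omega b \<mu> * (\<mu> ^ i + (\<Sum>j<i. coeff (phi b i) j * \<mu> ^ j))) has_field_derivative
      (-4 * \<mu> / (1 + a * \<mu>) ^ 5) * (\<mu> ^ i + (\<Sum>j<i. coeff (phi a i) j * \<mu> ^ j))
      + (0 + (\<Sum>j<i. deriv (\<lambda>b. coeff (phi b i) j) a * \<mu> ^ j)) * omega a \<mu>) (at a)"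
    by (rule DERIV_mult[OF omega_deriv[OF n] s])
  have pd: "poly (Dp a i) \<mu> = (\<Sum>j<i. deriv (\<lambda>b. coeff (phi b i) j) a * \<mu> ^ j)"
    unfolding Dp_def by (simp add: poly_sum poly_monom)
  have eqv: "(-4 * \<mu> / (1 + a * \<mu>) ^ 5) * (\<mu> ^ i + (\<Sum>j<i. coeff (phi a i) j * \<mu> ^ j))
      + (0 + (\<Sum>j<i. deriv (\<lambda>b. coeff (phi b i) j) a * \<mu> ^ j)) * omega a \<mu>
      = -4 * \<mu> / (1 + a * \<mu>) ^ 5 * poly (phi a i) \<mu> + omega a \<mu> * poly (Dp a i) \<mu>"
    unfolding pd rep[OF a, symmetric] by simp
  show ?thesis
  proof (rule has_field_derivative_transform_within_open[OF h[unfolded eqv]])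
    show "open {-1<..<1::real}" by simp
    show "a \<in> {-1<..<1}" using a .
    fix b :: real assume b: "b \<in> {-1<..<1}"
    show "omega b \<mu> * (\<mu> ^ i + (\<Sum>j<i. coeff (phi b i) j * \<mu> ^ j)) = Phi b i \<mu>"
      unfolding Phi_def rep[OF b] ..
  qed
qed

lemma gs_orth2:
  assumes "goodw w" "i \<noteq> j"
  shows "ip w (gs w i) (gs w j) = 0"
proof (cases "i < j")
  case True
  then have "ip w (gs w j) (gs w i) = 0" using gs_orth[OF assms(1)] gs_deg[of w i] by simp
  then show ?thesis by (subst ip_sym)
next
  case False
  then have "j < i" using assms(2) by simp
  then show ?thesis using gs_orth[OF assms(1)] gs_deg[of w j] by simp
qed

lemma expansion:
  assumes g: "goodw w" and dR: "degree R \<le> N"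
  shows "R = (\<Sum>i\<le>N. smult (ip w R (gs w i) / ip w (gs w i) (gs w i)) (gs w i))"
proof (rule ccontr)
  have cw: "continuous_on {-1..1} w" using g unfolding goodw_def by auto
  define S where "S = R - (\<Sum>i\<le>N. smult (ip w R (gs w i) / ip w (gs w i) (gs w i)) (gs w i))"
  assume "R \<noteq> (\<Sum>i\<le>N. smult (ip w R (gs w i) / ip w (gs w i) (gs w i)) (gs w i))"
  then have Snz: "S \<noteq> 0" unfolding S_def by simp
  have o: "\<forall>j<Suc N. ip w S (gs w j) = 0"
  proof (intro allI impI)
    fix j assume j: "j < Suc N"
    have pj: "ip w (gs w j) (gs w j) \<noteq> 0" using ip_pos[OF g gs_nz[of w j]] by simp
    have "ip w S (gs w j) = ip w R (gs w j) -
        (\<Sum>i\<le>N. ip w R (gs w i) / ip w (gs w i) (gs w i) * ip w (gs w i) (gs w j))"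
      unfolding S_def by (simp only: ip_diff_left[OF cw] ip_sum_left[OF cw] ip_smult_left)
    also have "(\<Sum>i\<le>N. ip w R (gs w i) / ip w (gs w i) (gs w i) * ip w (gs w i) (gs w j))
        = (\<Sum>i\<le>N. if i = j then ip w R (gs w j) else 0)"
    proof (rule sum.cong[OF refl])
      fix i assume "i \<in> {..N}"
      show "ip w R (gs w i) / ip w (gs w i) (gs w i) * ip w (gs w i) (gs w j) =
        (if i = j then ip w R (gs w j) else 0)"
        by (cases "i = j") (simp_all add: gs_orth2[OF g] pj)
    qed
    also have "\<dots> = ip w R (gs w j)" using j by simp
    finally show "ip w S (gs w j) = 0" by simp
  qed
  have dS: "degree S < Suc N" unfolding S_def
  proof -
    have "degree (\<Sum>i\<le>N. smult (ip w R (gs w i) / ip w (gs w i) (gs w i)) (gs w i)) \<le> N"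
      by (rule degree_sum_le) (auto intro: order.trans[OF degree_smult_le] simp: gs_deg)
    then show "degree (R - (\<Sum>i\<le>N. smult (ip w R (gs w i) / ip w (gs w i) (gs w i)) (gs w i))) < Suc N"
      using dR by (intro le_less_trans[OF degree_diff_le]) auto
  qed
  have "ip w S S = 0" by (rule orth_lemma[OF cw o dS])
  with ip_pos[OF g Snz] show False by simp
qed

lemma ip_monom_gs:
  assumes g: "goodw w"
  shows "ip w (monom 1 i) (gs w i) = ip w (gs w i) (gs w i)"
proof -
  have cw: "continuous_on {-1..1} w" using g unfolding goodw_def by auto
  define S where "S = (\<Sum>j<i. smult (ip w (monom 1 i) (gs w j) / ip w (gs w j) (gs w j)) (gs w j))"
  have e0: "gs w i = monom 1 i - S" unfolding S_def by (rule gs.simps)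
  have e: "monom 1 i = gs w i + S" unfolding e0 by simp
  have "ip w S (gs w i) = (\<Sum>j<i. ip w (monom 1 i) (gs w j) / ip w (gs w j) (gs w j) * ip w (gs w j) (gs w i))"
    unfolding S_def by (simp only: ip_sum_left[OF cw] ip_smult_left)
  also have "\<dots> = 0" by (intro sum.neutral ballI) (simp add: gs_orth2[OF g])
  finally show ?thesis unfolding e by (simp add: ip_add_left[OF cw])
qed

lemma coeff_lin_mult: fixes q :: "real poly" shows "coeff ([:1, a:] * q) (Suc m) = coeff q (Suc m) + a * coeff q m"
  by (simp add: mult_pCons_left)


theorem mainTheorem8:
  fixes N :: nat and f :: "nat \<Rightarrow> real \<Rightarrow> real" and \<alpha> :: "real \<Rightarrow> real"
  assumes N: "N \<ge> 1"
    and f_diff: "\<And>i z. i \<le> N \<Longrightarrow> f i differentiable at z"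
    and alpha_diff: "\<And>z. \<alpha> differentiable at z"
    and alpha_range: "\<And>z. \<alpha> z \<in> {-1<..<1}"
    and f1: "f 1 = (\<lambda>z. 0)"
  shows "\<forall>z. let a = \<alpha> z;
              g = (\<lambda>\<mu>. deriv (\<lambda>y. Ihat N f \<alpha> y \<mu>) z);
              c = a * deriv (f N) z - 4 * f N z * deriv \<alpha> z
          in (\<forall>\<mu>\<in>{-1..1}. g \<mu> - Pt a N g \<mu> = c * Phit a (N + 1) \<mu>)
           \<and> (\<forall>k\<le>N. integral {-1..1} (\<lambda>\<mu>. \<mu> ^ (k + 1) * (g \<mu> - Pt a N g \<mu>)) =
                    (if k < N then 0 else Kt a (N + 1) (N + 1) * c))
           \<and> (N = 1 \<longrightarrow> (\<forall>\<mu>\<in>{-1..1}. g \<mu> - Pt a N g \<mu> = 0)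
                 \<and> (\<forall>k\<le>N. integral {-1..1} (\<lambda>\<mu>. \<mu> ^ (k + 1) * (g \<mu> - Pt a N g \<mu>)) = 0))"
proof (intro allI)
  fix z
  define a where "a = \<alpha> z"
  define g where "g = (\<lambda>\<mu>. deriv (\<lambda>y. Ihat N f \<alpha> y \<mu>) z)"
  define c where "c = \<alpha> z * deriv (f N) z - 4 * f N z * deriv \<alpha> z"
  define da where "da = deriv \<alpha> z"
  define df where "df = (\<lambda>i. deriv (f i) z)"
  have aU: "a \<in> {-1<..<1}" using alpha_range[of z] by (simp add: a_def)
  have hA: "(\<alpha> has_field_derivative da) (at z)"
    using alpha_diff[of z] unfolding da_def by (simp add: DERIV_deriv_iff_real_differentiable)
  have hf: "(f i has_field_derivative df i) (at z)" if "i \<le> N" for i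
    using f_diff[OF that, of z] unfolding df_def by (simp add: DERIV_deriv_iff_real_differentiable)
  define dPhi where "dPhi = (\<lambda>i \<mu>. -4 * \<mu> / (1 + a * \<mu>) ^ 5 * poly (phi a i) \<mu> + omega a \<mu> * poly (Dp a i) \<mu>)"
  have gval: "g \<mu> = (\<Sum>i\<le>N. df i * Phi a i \<mu> + dPhi i \<mu> * da * f i z)" if m: "\<mu> \<in> {-1..1}" for \<mu>
  proof -
    have Pd: "((\<lambda>b. Phi b i \<mu>) has_field_derivative dPhi i \<mu>) (at (\<alpha> z))" for i
      using Phi_deriv[OF aU m, of i] unfolding dPhi_def a_def .
    have "((\<lambda>y. Ihat N f \<alpha> y \<mu>) has_field_derivative (\<Sum>i\<le>N. df i * Phi (\<alpha> z) i \<mu> + dPhi i \<mu> * da * f i z)) (at z)"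
      unfolding Ihat_def
    proof (rule DERIV_sum)
      fix i assume "i \<in> {..N}"
      then have i: "i \<le> N" by simp
      show "((\<lambda>y. f i y * Phi (\<alpha> y) i \<mu>) has_field_derivative df i * Phi (\<alpha> z) i \<mu> + dPhi i \<mu> * da * f i z) (at z)"
        by (rule DERIV_mult[OF hf[OF i] DERIV_chain2[OF Pd hA]])
    qed
    then show ?thesis unfolding g_def a_def by (rule DERIV_imp_deriv)
  qed
  define P where "P = (\<Sum>i\<le>N. smult (df i) ([:1, a:] * phi a i) +
      smult (da * f i z) (smult (-4) (pCons 0 (phi a i)) + [:1, a:] * Dp a i))"
  have gP: "g \<mu> = omegat a \<mu> * poly P \<mu>" if m: "\<mu> \<in> {-1..1}" for \<mu>
  proof -
    have n: "1 + a * \<mu> \<noteq> 0" using one_plus_pos[OF aU m] by simp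
    have "omegat a \<mu> * poly P \<mu> = (\<Sum>i\<le>N. omegat a \<mu> * (df i * ((1 + a * \<mu>) * poly (phi a i) \<mu>) +
        da * f i z * (-4 * (\<mu> * poly (phi a i) \<mu>) + (1 + a * \<mu>) * poly (Dp a i) \<mu>)))"
      unfolding P_def poly_sum sum_distrib_left by (intro sum.cong refl) (simp add: algebra_simps)
    also have "\<dots> = (\<Sum>i\<le>N. df i * Phi a i \<mu> + dPhi i \<mu> * da * f i z)"
    proof (rule sum.cong[OF refl])
      fix i
      show "omegat a \<mu> * (df i * ((1 + a * \<mu>) * poly (phi a i) \<mu>) +
        da * f i z * (-4 * (\<mu> * poly (phi a i) \<mu>) + (1 + a * \<mu>) * poly (Dp a i) \<mu>)) =
        df i * Phi a i \<mu> + dPhi i \<mu> * da * f i z"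
      proof -
        have o1: "omega a \<mu> = omegat a \<mu> * (1 + a * \<mu>)"
        proof -
          define t where "t = 1 + a * \<mu>"
          have tn: "t \<noteq> 0" using n by (simp add: t_def)
          have p5: "t ^ 5 = t ^ 4 * t" by (simp only: power_Suc2[symmetric]) simp
          show ?thesis unfolding omega_def omegat_def t_def[symmetric] p5 using tn by simp
        qed
        have o2: "-4 * \<mu> / (1 + a * \<mu>) ^ 5 = -4 * \<mu> * omegat a \<mu>"
          unfolding omegat_def by simp
        show ?thesis unfolding Phi_def dPhi_def o1 o2 by (simp add: algebra_simps)
      qed
    qed
    finally show ?thesis using gval[OF m] by simp
  qed
  have cphi0: "coeff (phi a i) k = 0" if "i < k" for i k
    using that by (simp add: coeff_eq_0 degree_phi[OF aU])
  have cphi1: "coeff (phi a i) i = 1" for i by (rule coeff_phi_top[OF aU])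
  have cD0: "coeff (Dp a i) k = 0" if "i \<le> k" for i k
    using that unfolding Dp_def by (simp add: coeff_sum coeff_monom)
  have cterm: "coeff (smult (df i) ([:1, a:] * phi a i) +
      smult (da * f i z) (smult (-4) (pCons 0 (phi a i)) + [:1, a:] * Dp a i)) (Suc m) =
      (if i = m then a * df i - 4 * f i z * da else 0)" if "i \<le> m" for i m
  proof (cases "i = m")
    case True
    then show ?thesis
      by (simp add: coeff_lin_mult cphi0 cphi1 cD0)
  next
    case False
    then have "i < m" using that by simp
    then show ?thesis
      by (simp add: coeff_lin_mult cphi0 cD0)
  qed
  have cP: "coeff P (Suc m) = (if m = N then c else 0)" if "N \<le> m" for m
  proof -
    have "coeff P (Suc m) = (\<Sum>i\<le>N. if i = m then a * df i - 4 * f i z * da else 0)"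
      unfolding P_def coeff_sum using that by (intro sum.cong refl cterm) auto
    also have "\<dots> = (if m = N then c else 0)"
      using that by (auto simp: c_def a_def df_def da_def)
    finally show ?thesis .
  qed
  define w where "w = omegat a"
  have gw: "goodw w" unfolding w_def by (rule goodw_omegat[OF aU])
  have cw: "continuous_on {-1..1} w" using gw unfolding goodw_def by auto
  define \<psi> where "\<psi> = (\<lambda>i. gs w i)"
  have phit\<psi>: "phit a i = \<psi> i" for i unfolding \<psi>_def w_def by (rule phit_gs[OF aU])
  define R where "R = P - smult c (\<psi> (Suc N))"
  have dR: "degree R \<le> N"
  proof (rule degree_le, intro allI impI)
    fix k assume "N < k"
    then obtain m where k: "k = Suc m" and m: "N \<le> m" by (cases k) auto
    have "coeff (\<psi> (Suc N)) (Suc m) = (if m = N then 1 else 0)"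
      using gs_deg[of w "Suc N"] m unfolding \<psi>_def by (auto simp: coeff_eq_0)
    then show "coeff R k = 0" unfolding R_def k using cP[OF m] by simp
  qed
  have PR: "P = R + smult c (\<psi> (Suc N))" unfolding R_def by simp
  have Kii: "Kt a i i = ip w (\<psi> i) (\<psi> i)" for i
  proof -
    have "Kt a i i = ip w (monom 1 i) (\<psi> i)"
      unfolding Kt_def ip_def phit\<psi> w_def by (simp add: poly_monom)
    then show ?thesis unfolding \<psi>_def using ip_monom_gs[OF gw] by simp
  qed
  have ipg: "integral {-1..1} (\<lambda>\<nu>. g \<nu> * poly (phit a i) \<nu>) = ip w R (\<psi> i)" if i: "i \<le> N" for i
  proof -
    have "integral {-1..1} (\<lambda>\<nu>. g \<nu> * poly (phit a i) \<nu>) = ip w P (\<psi> i)"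
      unfolding ip_def phit\<psi>
      by (rule integral_cong) (simp add: gP w_def mult_ac)
    also have "\<dots> = ip w R (\<psi> i) + c * ip w (\<psi> (Suc N)) (\<psi> i)"
      unfolding PR by (simp add: ip_add_left[OF cw] ip_smult_left)
    also have "ip w (\<psi> (Suc N)) (\<psi> i) = 0" unfolding \<psi>_def using i by (intro gs_orth2[OF gw]) auto
    finally show ?thesis by simp
  qed
  have PtR: "Pt a N g \<mu> = w \<mu> * poly R \<mu>" for \<mu>
  proof -
    have "Pt a N g \<mu> = (\<Sum>i\<le>N. ip w R (\<psi> i) / ip w (\<psi> i) (\<psi> i) * (w \<mu> * poly (\<psi> i) \<mu>))"
      unfolding Pt_def by (intro sum.cong refl) (simp add: ipg[unfolded phit\<psi>] Kii Phit_def phit\<psi> w_def)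
    also have "\<dots> = w \<mu> * poly (\<Sum>i\<le>N. smult (ip w R (gs w i) / ip w (gs w i) (gs w i)) (gs w i)) \<mu>"
      by (simp add: poly_sum sum_distrib_left \<psi>_def mult_ac)
    also have "\<dots> = w \<mu> * poly R \<mu>" using expansion[OF gw dR] by simp
    finally show ?thesis .
  qed
  have claim1: "g \<mu> - Pt a N g \<mu> = c * Phit a (N + 1) \<mu>" if m: "\<mu> \<in> {-1..1}" for \<mu>
    unfolding gP[OF m] PtR PR Phit_def phit\<psi> w_def by (simp add: algebra_simps)
  have claim2: "integral {-1..1} (\<lambda>\<mu>. \<mu> ^ (k + 1) * (g \<mu> - Pt a N g \<mu>)) =
      (if k < N then 0 else Kt a (N + 1) (N + 1) * c)" if k: "k \<le> N" for k
  proof -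
    have "integral {-1..1} (\<lambda>\<mu>. \<mu> ^ (k + 1) * (g \<mu> - Pt a N g \<mu>)) =
        integral {-1..1} (\<lambda>\<mu>. c * (\<mu> ^ (k + 1) * poly (phit a (N + 1)) \<mu> * omegat a \<mu>))"
      by (rule integral_cong) (simp add: claim1 Phit_def mult_ac)
    also have "\<dots> = c * Kt a (k + 1) (N + 1)" unfolding Kt_def by simp
    also have "\<dots> = (if k < N then 0 else Kt a (N + 1) (N + 1) * c)"
    proof (cases "k < N")
      case True
      have "Kt a (k + 1) (N + 1) = ip w (\<psi> (N + 1)) (monom 1 (k + 1))"
        unfolding Kt_def ip_def phit\<psi> w_def by (simp add: poly_monom mult_ac)
      also have "\<dots> = 0" unfolding \<psi>_def
        by (rule gs_orth[OF gw]) (use True in \<open>auto intro: le_less_trans[OF degree_monom_le]\<close>)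
      finally show ?thesis using True by simp
    next
      case False
      then have "k = N" using k by simp
      then show ?thesis by simp
    qed
    finally show ?thesis .
  qed
  have c0: "N = 1 \<Longrightarrow> c = 0"
  proof -
    assume "N = 1"
    moreover have "deriv (f 1) z = 0" unfolding f1 by (rule DERIV_imp_deriv[OF DERIV_const])
    ultimately show "c = 0" unfolding c_def using f1 by simp
  qed
  have main: "(\<forall>\<mu>\<in>{-1..1}. g \<mu> - Pt a N g \<mu> = c * Phit a (N + 1) \<mu>)
           \<and> (\<forall>k\<le>N. integral {-1..1} (\<lambda>\<mu>. \<mu> ^ (k + 1) * (g \<mu> - Pt a N g \<mu>)) =
                    (if k < N then 0 else Kt a (N + 1) (N + 1) * c))
           \<and> (N = 1 \<longrightarrow> (\<forall>\<mu>\<in>{-1..1}. g \<mu> - Pt a N g \<mu> = 0)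
                 \<and> (\<forall>k\<le>N. integral {-1..1} (\<lambda>\<mu>. \<mu> ^ (k + 1) * (g \<mu> - Pt a N g \<mu>)) = 0))"
  proof (intro conjI)
    show "\<forall>\<mu>\<in>{-1..1}. g \<mu> - Pt a N g \<mu> = c * Phit a (N + 1) \<mu>" using claim1 by blast
    show "\<forall>k\<le>N. integral {-1..1} (\<lambda>\<mu>. \<mu> ^ (k + 1) * (g \<mu> - Pt a N g \<mu>)) =
                    (if k < N then 0 else Kt a (N + 1) (N + 1) * c)" using claim2 by blast
    show "N = 1 \<longrightarrow> (\<forall>\<mu>\<in>{-1..1}. g \<mu> - Pt a N g \<mu> = 0)
                 \<and> (\<forall>k\<le>N. integral {-1..1} (\<lambda>\<mu>. \<mu> ^ (k + 1) * (g \<mu> - Pt a N g \<mu>)) = 0)"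
    proof
      assume "N = 1"
      then have cz: "c = 0" by (rule c0)
      have A: "\<forall>\<mu>\<in>{-1..1}. g \<mu> - Pt a N g \<mu> = 0" using claim1 cz by simp
      have B: "\<forall>k\<le>N. integral {-1..1} (\<lambda>\<mu>. \<mu> ^ (k + 1) * (g \<mu> - Pt a N g \<mu>)) = 0"
      proof (intro allI impI)
        fix k assume "k \<le> N"
        then show "integral {-1..1} (\<lambda>\<mu>. \<mu> ^ (k + 1) * (g \<mu> - Pt a N g \<mu>)) = 0"
          using claim2[of k] cz by simp
      qed
      show "(\<forall>\<mu>\<in>{-1..1}. g \<mu> - Pt a N g \<mu> = 0)
                 \<and> (\<forall>k\<le>N. integral {-1..1} (\<lambda>\<mu>. \<mu> ^ (k + 1) * (g \<mu> - Pt a N g \<mu>)) = 0)"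
        using A B by blast
    qed
  qed
  then show "let a = \<alpha> z;
              g = (\<lambda>\<mu>. deriv (\<lambda>y. Ihat N f \<alpha> y \<mu>) z);
              c = a * deriv (f N) z - 4 * f N z * deriv \<alpha> z
          in (\<forall>\<mu>\<in>{-1..1}. g \<mu> - Pt a N g \<mu> = c * Phit a (N + 1) \<mu>)
           \<and> (\<forall>k\<le>N. integral {-1..1} (\<lambda>\<mu>. \<mu> ^ (k + 1) * (g \<mu> - Pt a N g \<mu>)) =
                    (if k < N then 0 else Kt a (N + 1) (N + 1) * c))
           \<and> (N = 1 \<longrightarrow> (\<forall>\<mu>\<in>{-1..1}. g \<mu> - Pt a N g \<mu> = 0)
                 \<and> (\<forall>k\<le>N. integral {-1..1} (\<lambda>\<mu>. \<mu> ^ (k + 1) * (g \<mu> - Pt a N g \<mu>)) = 0))"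
    unfolding Let_def a_def g_def c_def .
qed

end
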